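(* Let $n\geq 1$ and let $\Gamma'$ be a connected 3-regular graph with $n-1$ legs. Let $\Gamma_1,\Gamma_2$ be two graphs each obtained from $\Gamma'$ by adding a new vertex in the interior of some edge or leg of $\Gamma'$ and attaching a new leg to that vertex. Then $\Gamma_1$ and $\Gamma_2$ (which are 3-regular graphs with $n$ legs and the same first Betti number as $\Gamma'$) are linked.
   Context: A graph with $n$ legs consists of a finite nonempty vertex set, a finite set of half-edges, an involution on half-edges with exactly $n$ fixed points (legs), and an endpoint map from half-edges to vertices; edges are the 2-element orbits. Graphs are connected. Valency of $v$ = number of half-edges (including legs) at $v$; 3-regular means all valencies are 3. $b_1=|E|-|V|+1$. $\Gamma/e$ denotes contraction of an edge $e$. Strongly linked: non-loop edges $e_i\in E(\Gamma_i)$ and an isomorphism $\Gamma_1/e_1\cong\Gamma_2/e_2$ carrying the image vertex of $e_1$ to that of $e_2$; linked: joined by a finite chain of consecutively strongly linked graphs. *)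

theory Defs
  imports Main
begin

text \<open>A graph with legs: vertex set, half-edge set, an involution on half-edges
  (fixed points = legs, 2-element orbits = edges) and an endpoint map.\<close>

record ('v, 'h) lgraph =
  verts  :: "'v set"
  hedges :: "'h set"
  hinv   :: "'h \<Rightarrow> 'h"
  hend   :: "'h \<Rightarrow> 'v"

definition legs :: "('v, 'h) lgraph \<Rightarrow> 'h set" where
  "legs G = {h \<in> hedges G. hinv G h = h}"

definition edges :: "('v, 'h) lgraph \<Rightarrow> 'h set set" where
  "edges G = {{h, hinv G h} | h. h \<in> hedges G \<and> hinv G h \<noteq> h}"

definition adj :: "('v, 'h) lgraph \<Rightarrow> 'v \<Rightarrow> 'v \<Rightarrow> bool" where
  "adj G v w \<longleftrightarrow> (\<exists>h \<in> hedges G. hinv G h \<noteq> h \<and> hend G h = v \<and> hend G (hinv G h) = w)"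

definition connected_graph :: "('v, 'h) lgraph \<Rightarrow> bool" where
  "connected_graph G \<longleftrightarrow> (\<forall>v \<in> verts G. \<forall>w \<in> verts G. (adj G)\<^sup>*\<^sup>* v w)"

definition is_graph :: "('v, 'h) lgraph \<Rightarrow> bool" where
  "is_graph G \<longleftrightarrow> finite (verts G) \<and> verts G \<noteq> {} \<and> finite (hedges G)
     \<and> (\<forall>h \<in> hedges G. hinv G h \<in> hedges G \<and> hinv G (hinv G h) = h \<and> hend G h \<in> verts G)
     \<and> connected_graph G"

definition valency :: "('v, 'h) lgraph \<Rightarrow> 'v \<Rightarrow> nat" where
  "valency G v = card {h \<in> hedges G. hend G h = v}"

definition three_regular :: "('v, 'h) lgraph \<Rightarrow> bool" where
  "three_regular G \<longleftrightarrow> (\<forall>v \<in> verts G. valency G v = 3)"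

definition betti1 :: "('v, 'h) lgraph \<Rightarrow> int" where
  "betti1 G = int (card (edges G)) - int (card (verts G)) + 1"

definition nonloop_he :: "('v, 'h) lgraph \<Rightarrow> 'h \<Rightarrow> bool" where
  "nonloop_he G h \<longleftrightarrow> h \<in> hedges G \<and> hinv G h \<noteq> h \<and> hend G h \<noteq> hend G (hinv G h)"

definition contract :: "('v, 'h) lgraph \<Rightarrow> 'h \<Rightarrow> ('v, 'h) lgraph" where
  "contract G h = \<lparr> verts = verts G - {hend G (hinv G h)},
      hedges = hedges G - {h, hinv G h},
      hinv = hinv G,
      hend = (\<lambda>x. if hend G x = hend G (hinv G h) then hend G h else hend G x) \<rparr>"

definition contract_vertex :: "('v, 'h) lgraph \<Rightarrow> 'h \<Rightarrow> 'v" where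
  "contract_vertex G h = hend G h"

definition iso_at :: "('v, 'h) lgraph \<Rightarrow> ('w, 'k) lgraph \<Rightarrow> 'v \<Rightarrow> 'w \<Rightarrow> bool" where
  "iso_at G1 G2 a b \<longleftrightarrow> (\<exists>fV fH. bij_betw fV (verts G1) (verts G2)
      \<and> bij_betw fH (hedges G1) (hedges G2)
      \<and> (\<forall>h \<in> hedges G1. fH (hinv G1 h) = hinv G2 (fH h) \<and> fV (hend G1 h) = hend G2 (fH h))
      \<and> fV a = b)"

definition strongly_linked :: "('v, 'h) lgraph \<Rightarrow> ('w, 'k) lgraph \<Rightarrow> bool" where
  "strongly_linked G1 G2 \<longleftrightarrow> (\<exists>h1 h2. nonloop_he G1 h1 \<and> nonloop_he G2 h2
      \<and> iso_at (contract G1 h1) (contract G2 h2) (contract_vertex G1 h1) (contract_vertex G2 h2))"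

definition linked :: "('v, 'h) lgraph \<Rightarrow> ('v, 'h) lgraph \<Rightarrow> bool" where
  "linked G1 G2 \<longleftrightarrow>
     (\<lambda>A B. is_graph A \<and> is_graph B \<and> strongly_linked A B)\<^sup>*\<^sup>* G1 G2"

text \<open>Insert a new vertex w in the interior of the edge (or leg) containing h0,
  with new half-edges a (paired with h0), b (paired with the old partner of h0,
  or a leg if h0 was a leg) and the new leg c, all attached at w.\<close>
definition insert_leg :: "('v, 'h) lgraph \<Rightarrow> 'h \<Rightarrow> 'v \<Rightarrow> 'h \<Rightarrow> 'h \<Rightarrow> 'h \<Rightarrow> ('v, 'h) lgraph" where
  "insert_leg G h0 w a b c = \<lparr> verts = insert w (verts G),
      hedges = hedges G \<union> {a, b, c},
      hinv = (\<lambda>x. if x = h0 then a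
                  else if x = a then h0
                  else if x = b then (if hinv G h0 = h0 then b else hinv G h0)
                  else if x = hinv G h0 \<and> hinv G h0 \<noteq> h0 then b
                  else if x = c then c
                  else hinv G x),
      hend = (\<lambda>x. if x \<in> {a, b, c} then w else hend G x) \<rparr>"

definition obtained_by_leg_insertion :: "('v, 'h) lgraph \<Rightarrow> ('v, 'h) lgraph \<Rightarrow> bool" where
  "obtained_by_leg_insertion G' G \<longleftrightarrow> (\<exists>h0 \<in> hedges G'. \<exists>w a b c.
      w \<notin> verts G' \<and> a \<notin> hedges G' \<and> b \<notin> hedges G' \<and> c \<notin> hedges G'
      \<and> distinct [a, b, c] \<and> G = insert_leg G' h0 w a b c)"

end

theory Submission
  imports Defs
begin

definition freshg :: "('v, 'h) lgraph \<Rightarrow> 'v \<Rightarrow> 'h \<Rightarrow> 'h \<Rightarrow> 'h \<Rightarrow> bool" where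
  "freshg G w a b c \<longleftrightarrow> w \<notin> verts G \<and> a \<notin> hedges G \<and> b \<notin> hedges G \<and> c \<notin> hedges G \<and> distinct [a, b, c]"

definition wfg :: "('v, 'h) lgraph \<Rightarrow> bool" where
  "wfg G \<longleftrightarrow> (\<forall>h \<in> hedges G. hinv G h \<in> hedges G \<and> hinv G (hinv G h) = h \<and> hend G h \<in> verts G)"

lemma ins_simps:
  assumes "wfg G" "freshg G w a b c" "h0 \<in> hedges G"
  shows "verts (insert_leg G h0 w a b c) = insert w (verts G)"
    "hedges (insert_leg G h0 w a b c) = hedges G \<union> {a, b, c}"
    "hinv (insert_leg G h0 w a b c) h0 = a"
    "hinv (insert_leg G h0 w a b c) a = h0"
    "hinv (insert_leg G h0 w a b c) b = (if hinv G h0 = h0 then b else hinv G h0)"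
    "hinv (insert_leg G h0 w a b c) c = c"
    "x \<in> hedges G \<Longrightarrow> x \<noteq> h0 \<Longrightarrow> x = hinv G h0 \<Longrightarrow> hinv (insert_leg G h0 w a b c) x = b"
    "x \<in> hedges G \<Longrightarrow> x \<noteq> h0 \<Longrightarrow> x \<noteq> hinv G h0 \<Longrightarrow> hinv (insert_leg G h0 w a b c) x = hinv G x"
    "hend (insert_leg G h0 w a b c) a = w"
    "hend (insert_leg G h0 w a b c) b = w"
    "hend (insert_leg G h0 w a b c) c = w"
    "x \<in> hedges G \<Longrightarrow> hend (insert_leg G h0 w a b c) x = hend G x"
  using assms unfolding insert_leg_def freshg_def wfg_def by auto

lemma ins_graph:
  assumes "is_graph G" "freshg G w a b c" "h0 \<in> hedges G"
  shows "is_graph (insert_leg G h0 w a b c)"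
proof -
  let ?G = "insert_leg G h0 w a b c"
  have wfg: "wfg G" using assms(1) unfolding is_graph_def wfg_def by blast
  note s = ins_simps[OF wfg assms(2,3)]
  have fr: "w \<notin> verts G" "a \<notin> hedges G" "b \<notin> hedges G" "c \<notin> hedges G" "a \<noteq> b" "a \<noteq> c" "b \<noteq> c"
    using assms(2) unfolding freshg_def by auto
  have inv: "\<forall>h \<in> hedges G. hinv G h \<in> hedges G \<and> hinv G (hinv G h) = h \<and> hend G h \<in> verts G"
    using wfg unfolding wfg_def by blast
  have h0: "hinv G h0 \<in> hedges G" "hinv G (hinv G h0) = h0" "hend G h0 \<in> verts G" "hend G (hinv G h0) \<in> verts G"
    using inv assms(3) by auto
  have lift: "(adj ?G)\<^sup>*\<^sup>* p q" if "adj G p q" for p q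
  proof -
    from that obtain g where g: "g \<in> hedges G" "hinv G g \<noteq> g" "hend G g = p" "hend G (hinv G g) = q"
      unfolding adj_def by blast
    have gi: "hinv G g \<in> hedges G" "hinv G (hinv G g) = g" using inv g(1) by auto
    show ?thesis
    proof (cases "g = h0")
      case True
      have 1: "adj ?G p w" unfolding adj_def
        by (rule bexI[of _ h0]) (use True g fr s assms(3) in auto)
      have 2: "adj ?G w q" unfolding adj_def
        by (rule bexI[of _ b]) (use True g gi fr s in auto)
      show ?thesis using 1 2 by auto
    next
      case F: False
      show ?thesis
      proof (cases "g = hinv G h0")
        case True
        have 1: "adj ?G p w" unfolding adj_def
          by (rule bexI[of _ g]) (use True F g gi fr s in auto)
        have 2: "adj ?G w q" unfolding adj_def
          by (rule bexI[of _ a]) (use True F g gi h0 fr s assms(3) in auto)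
        show ?thesis using 1 2 by auto
      next
        case False
        have "adj ?G p q" unfolding adj_def
          by (rule bexI[of _ g]) (use False F g gi h0 fr s in auto)
        then show ?thesis by auto
      qed
    qed
  qed
  have liftr: "(adj ?G)\<^sup>*\<^sup>* p q" if "(adj G)\<^sup>*\<^sup>* p q" for p q
    using that
  proof induction
    case base then show ?case by simp
  next
    case (step y z) then show ?case using lift by (meson rtranclp_trans)
  qed
  have wv: "adj ?G w (hend G h0)" unfolding adj_def
    by (rule bexI[of _ a]) (use fr s assms(3) in auto)
  have vw: "adj ?G (hend G h0) w" unfolding adj_def
    by (rule bexI[of _ h0]) (use fr s assms(3) in auto)
  have conn: "connected_graph G" using assms(1) unfolding is_graph_def by blast
  have "connected_graph ?G"
    unfolding connected_graph_def
  proof (intro ballI)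
    fix x y assume x: "x \<in> verts ?G" and y: "y \<in> verts ?G"
    have toV: "(adj ?G)\<^sup>*\<^sup>* x (hend G h0)"
    proof (cases "x = w")
      case True then show ?thesis using wv by auto
    next
      case False then have "x \<in> verts G" using x s by auto
      then show ?thesis using liftr conn h0(3) unfolding connected_graph_def by blast
    qed
    have fromV: "(adj ?G)\<^sup>*\<^sup>* (hend G h0) y"
    proof (cases "y = w")
      case True then show ?thesis using vw by auto
    next
      case False then have "y \<in> verts G" using y s by auto
      then show ?thesis using liftr conn h0(3) unfolding connected_graph_def by blast
    qed
    show "(adj ?G)\<^sup>*\<^sup>* x y" using toV fromV by auto
  qed
  moreover have "\<forall>h \<in> hedges ?G. hinv ?G h \<in> hedges ?G \<and> hinv ?G (hinv ?G h) = h \<and> hend ?G h \<in> verts ?G"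
  proof
    fix h assume h: "h \<in> hedges ?G"
    show "hinv ?G h \<in> hedges ?G \<and> hinv ?G (hinv ?G h) = h \<and> hend ?G h \<in> verts ?G"
    proof (cases "h \<in> hedges G")
      case True
      then have "hinv G h \<in> hedges G" "hinv G (hinv G h) = h" "hend G h \<in> verts G" using inv by auto
      note hh = this
      show ?thesis
      proof (cases "h = h0")
        case True then show ?thesis using s h0 fr assms(3) by simp
      next
        case F: False
        show ?thesis
        proof (cases "h = hinv G h0")
          case True
          then have "hinv G h0 \<noteq> h0" using F h0 by auto
          then show ?thesis using True F s hh h0 fr by simp
        next
          case False
          have "hinv G h \<noteq> h0" using False hh h0 by metis
          moreover have "hinv G h \<noteq> hinv G h0" using F hh h0 by metis
          ultimately show ?thesis using False F s hh True by simp
        qed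
      qed
    next
      case False
      then have "h = a \<or> h = b \<or> h = c" using h s by auto
      then show ?thesis using s h0 fr assms(3) by auto
    qed
  qed
  ultimately show ?thesis using assms(1) s unfolding is_graph_def by auto
qed


lemma sl_same:
  assumes wfg: "wfg G" and f1: "freshg G w a b c" and f2: "freshg G w' a' b' c'"
    and h0in: "h0 \<in> hedges G" and h0in': "h0' \<in> hedges G" and v: "hend G h0 = hend G h0'"
  shows "strongly_linked (insert_leg G h0 w a b c) (insert_leg G h0' w' a' b' c')"
proof -
  let ?G1 = "insert_leg G h0 w a b c" and ?G2 = "insert_leg G h0' w' a' b' c'"
  note s1 = ins_simps[OF wfg f1 h0in] and s2 = ins_simps[OF wfg f2 h0in']
  have fr: "w \<notin> verts G" "a \<notin> hedges G" "b \<notin> hedges G" "c \<notin> hedges G" "a \<noteq> b" "a \<noteq> c" "b \<noteq> c"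
    "w' \<notin> verts G" "a' \<notin> hedges G" "b' \<notin> hedges G" "c' \<notin> hedges G" "a' \<noteq> b'" "a' \<noteq> c'" "b' \<noteq> c'"
    using f1 f2 unfolding freshg_def by auto
  have inv: "\<And>h. h \<in> hedges G \<Longrightarrow> hinv G h \<in> hedges G \<and> hinv G (hinv G h) = h \<and> hend G h \<in> verts G"
    using wfg unfolding wfg_def by blast
  have hv: "hend G h0 \<in> verts G" "hinv G h0 \<in> hedges G" "hinv G (hinv G h0) = h0"
     "hinv G h0' \<in> hedges G" "hinv G (hinv G h0') = h0'" using inv h0in h0in' by auto
  have neq: "hend G h0 \<noteq> w" "hend G h0' \<noteq> w'" "a \<noteq> h0" "a' \<noteq> h0'"
    using hv fr h0in h0in' v by metis+
  have nl1: "nonloop_he ?G1 h0" unfolding nonloop_he_def using s1 h0in fr hv neq by simp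
  have nl2: "nonloop_he ?G2 h0'" unfolding nonloop_he_def using s2 h0in' fr hv v neq by simp
  define fH where "fH x = (if x = b then (if h0 = h0' then b' else h0) else if x = c then c'
      else if x = h0' then b' else x)" for x
  define gH where "gH y = (if y = b' then (if h0 = h0' then b else h0') else if y = c' then c
      else if y = h0 then b else y)" for y
  have E1: "hedges (contract ?G1 h0) = (hedges G - {h0}) \<union> {b, c}"
    unfolding contract_def using s1 fr h0in neq by auto
  have E2: "hedges (contract ?G2 h0') = (hedges G - {h0'}) \<union> {b', c'}"
    unfolding contract_def using s2 fr h0in' neq by auto
  have V1: "verts (contract ?G1 h0) = verts G" unfolding contract_def using s1 fr h0in neq by auto
  have V2: "verts (contract ?G2 h0') = verts G" unfolding contract_def using s2 fr h0in' neq by auto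
  have bij: "bij_betw fH (hedges (contract ?G1 h0)) (hedges (contract ?G2 h0'))"
    unfolding E1 E2
    by (rule bij_betw_byWitness[where f'=gH]) (use fr h0in h0in' in \<open>auto simp: fH_def gH_def\<close>)
  have hinvc1: "hinv (contract ?G1 h0) = hinv ?G1" "hinv (contract ?G2 h0') = hinv ?G2"
    unfolding contract_def by auto
  have hend1: "hend (contract ?G1 h0) x = (if x \<in> hedges G then hend G x else hend G h0)"
    if "x \<in> hedges (contract ?G1 h0)" for x
  proof -
    have "hend (contract ?G1 h0) x = (if hend ?G1 x = w then hend G h0 else hend ?G1 x)"
      using s1 h0in by (simp add: contract_def)
    moreover have "x \<in> hedges G \<Longrightarrow> hend G x \<noteq> w" using inv[of x] fr by auto
    ultimately show ?thesis using that s1 unfolding E1 by auto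
  qed
  have hend2: "hend (contract ?G2 h0') x = (if x \<in> hedges G then hend G x else hend G h0)"
    if "x \<in> hedges (contract ?G2 h0')" for x
  proof -
    have "hend (contract ?G2 h0') x = (if hend ?G2 x = w' then hend G h0 else hend ?G2 x)"
      using s2 h0in' v by (simp add: contract_def)
    moreover have "x \<in> hedges G \<Longrightarrow> hend G x \<noteq> w'" using inv[of x] fr by auto
    ultimately show ?thesis using that s2 unfolding E2 by auto
  qed
  have fHin: "fH x \<in> hedges (contract ?G2 h0')" if "x \<in> hedges (contract ?G1 h0)" for x
    using bij that by (meson bij_betw_apply)
  have main: "fH (hinv ?G1 x) = hinv ?G2 (fH x) \<and> hend (contract ?G1 h0) x = hend (contract ?G2 h0') (fH x)"
    if x: "x \<in> hedges (contract ?G1 h0)" for x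
  proof -
    have he: "hend (contract ?G1 h0) x = hend (contract ?G2 h0') (fH x)"
      using hend1[OF x] hend2[OF fHin[OF x]] x fr v unfolding E1 by (auto simp: fH_def)
    have hi: "fH (hinv ?G1 x) = hinv ?G2 (fH x)"
    proof -
      consider "x = b" | "x = c" | "x \<in> hedges G" "x \<noteq> h0" using x E1 by auto
      then show ?thesis
      proof cases
        case 1
        have k: "hinv G h0 \<noteq> b" "hinv G h0 \<noteq> c" "hinv G h0' \<noteq> b'" "hinv G h0' \<noteq> c'"
          "hinv G h0 = h0' \<longleftrightarrow> hinv G h0' = h0" using hv fr by metis+
        show ?thesis
        proof (cases "h0 = h0'")
          case True then show ?thesis using 1 k s1 s2 hv fr by (auto simp: fH_def)
        next
          case False
          have "hinv ?G2 h0 = (if hinv G h0' = h0 then b' else hinv G h0)"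
            using s2 False h0in by auto
          then show ?thesis using False 1 k s1 s2 hv fr by (auto simp: fH_def)
        qed
      next
        case 2 then show ?thesis using s1 s2 fr by (simp add: fH_def)
      next
        case 3
        have y: "hinv G x \<in> hedges G" "hinv G (hinv G x) = x" using inv 3 by auto
        have k: "hinv G h0 \<noteq> b" "hinv G h0 \<noteq> c" "hinv G h0' \<noteq> b'" "hinv G h0' \<noteq> c'"
          "hinv G h0 = h0' \<longleftrightarrow> hinv G h0' = h0"
          "hinv G x = h0 \<longleftrightarrow> x = hinv G h0" "hinv G x = h0' \<longleftrightarrow> x = hinv G h0'"
          "x \<noteq> b" "x \<noteq> c" "hinv G x \<noteq> b" "hinv G x \<noteq> c" "x \<noteq> b'" "x \<noteq> c'"
          "hinv G x \<noteq> b'" "hinv G x \<noteq> c'"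
          using hv fr y 3 by metis+
        have L: "hinv ?G1 x = (if x = hinv G h0 then b else hinv G x)"
          using s1 3 by auto
        have R: "hinv ?G2 x = (if x = h0' then a' else if x = hinv G h0' then b' else hinv G x)"
          using s2 3 by auto
        show ?thesis
        proof (cases "x = h0'")
          case True
          then show ?thesis using L R 3 k s1 s2 hv fr y by (auto simp: fH_def)
        next
          case False
          then show ?thesis using L R 3 k s1 s2 hv fr y by (auto simp: fH_def)
        qed
      qed
    qed
    show ?thesis using he hi by blast
  qed
  have "iso_at (contract ?G1 h0) (contract ?G2 h0') (contract_vertex ?G1 h0) (contract_vertex ?G2 h0')"
    unfolding iso_at_def
    apply (rule exI[of _ id], rule exI[of _ fH])
    using bij main V1 V2 s1 s2 h0in h0in' v hinvc1 by (simp add: contract_vertex_def)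
  then show ?thesis unfolding strongly_linked_def using nl1 nl2 by blast
qed


lemma sl_flip:
  assumes wfg: "wfg G" and f1: "freshg G w a b c" and f2: "freshg G w' a' b' c'"
    and h0in: "h0 \<in> hedges G" and kne: "hinv G h0 \<noteq> h0"
  shows "strongly_linked (insert_leg G h0 w a b c) (insert_leg G (hinv G h0) w' a' b' c')"
proof -
  let ?k = "hinv G h0"
  let ?G1 = "insert_leg G h0 w a b c" and ?G2 = "insert_leg G ?k w' a' b' c'"
  have inv: "\<And>h. h \<in> hedges G \<Longrightarrow> hinv G h \<in> hedges G \<and> hinv G (hinv G h) = h \<and> hend G h \<in> verts G"
    using wfg unfolding wfg_def by blast
  have hv: "hend G h0 \<in> verts G" "?k \<in> hedges G" "hinv G ?k = h0" using inv h0in by auto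
  note s1 = ins_simps[OF wfg f1 h0in] and s2 = ins_simps[OF wfg f2 hv(2)]
  have fr: "w \<notin> verts G" "a \<notin> hedges G" "b \<notin> hedges G" "c \<notin> hedges G" "a \<noteq> b" "a \<noteq> c" "b \<noteq> c"
    "w' \<notin> verts G" "a' \<notin> hedges G" "b' \<notin> hedges G" "c' \<notin> hedges G" "a' \<noteq> b'" "a' \<noteq> c'" "b' \<noteq> c'"
    using f1 f2 unfolding freshg_def by auto
  have neq: "hend G h0 \<noteq> w" "hend G h0 \<noteq> w'" "a \<noteq> h0" "b' \<noteq> h0" "b \<noteq> ?k" "a' \<noteq> ?k" "c \<noteq> ?k" "c' \<noteq> ?k"
    using hv fr h0in by metis+
  have i2: "hinv ?G2 h0 = b'" using s2 h0in kne hv by auto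
  have nl1: "nonloop_he ?G1 h0" unfolding nonloop_he_def using s1 h0in fr hv neq by simp
  have nl2: "nonloop_he ?G2 h0" unfolding nonloop_he_def using s2 i2 h0in fr hv neq by simp
  define fH where "fH x = (if x = b then a' else if x = c then c' else x)" for x
  define gH where "gH y = (if y = a' then b else if y = c' then c else y)" for y
  have E1: "hedges (contract ?G1 h0) = (hedges G - {h0}) \<union> {b, c}"
    unfolding contract_def using s1 fr h0in neq by auto
  have E2: "hedges (contract ?G2 h0) = (hedges G - {h0}) \<union> {a', c'}"
    unfolding contract_def using s2 i2 fr h0in neq by auto
  have V1: "verts (contract ?G1 h0) = verts G" unfolding contract_def using s1 fr by auto
  have V2: "verts (contract ?G2 h0) = verts G" unfolding contract_def using s2 i2 fr by auto
  have bij: "bij_betw fH (hedges (contract ?G1 h0)) (hedges (contract ?G2 h0))"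
    unfolding E1 E2
    by (rule bij_betw_byWitness[where f'=gH]) (use fr h0in in \<open>auto simp: fH_def gH_def\<close>)
  have hinvc1: "hinv (contract ?G1 h0) = hinv ?G1" "hinv (contract ?G2 h0) = hinv ?G2"
    unfolding contract_def by auto
  have hend1: "hend (contract ?G1 h0) x = (if x \<in> hedges G then hend G x else hend G h0)"
    if "x \<in> hedges (contract ?G1 h0)" for x
  proof -
    have "hend (contract ?G1 h0) x = (if hend ?G1 x = w then hend G h0 else hend ?G1 x)"
      using s1 h0in by (simp add: contract_def)
    moreover have "x \<in> hedges G \<Longrightarrow> hend G x \<noteq> w" using inv[of x] fr by auto
    ultimately show ?thesis using that s1 unfolding E1 by auto
  qed
  have hend2: "hend (contract ?G2 h0) x = (if x \<in> hedges G then hend G x else hend G h0)"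
    if "x \<in> hedges (contract ?G2 h0)" for x
  proof -
    have "hend (contract ?G2 h0) x = (if hend ?G2 x = w' then hend G h0 else hend ?G2 x)"
      using s2 i2 h0in by (simp add: contract_def)
    moreover have "x \<in> hedges G \<Longrightarrow> hend G x \<noteq> w'" using inv[of x] fr by auto
    ultimately show ?thesis using that s2 unfolding E2 by auto
  qed
  have fHin: "fH x \<in> hedges (contract ?G2 h0)" if "x \<in> hedges (contract ?G1 h0)" for x
    using bij that by (meson bij_betw_apply)
  have main: "fH (hinv ?G1 x) = hinv ?G2 (fH x) \<and> hend (contract ?G1 h0) x = hend (contract ?G2 h0) (fH x)"
    if x: "x \<in> hedges (contract ?G1 h0)" for x
  proof -
    have he: "hend (contract ?G1 h0) x = hend (contract ?G2 h0) (fH x)"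
      using hend1[OF x] hend2[OF fHin[OF x]] x fr unfolding E1 by (auto simp: fH_def)
    have hi: "fH (hinv ?G1 x) = hinv ?G2 (fH x)"
    proof -
      consider "x = b" | "x = c" | "x \<in> hedges G" "x \<noteq> h0" using x E1 by auto
      then show ?thesis
      proof cases
        case 1
        then show ?thesis using s1 s2 fr kne neq hv by (simp add: fH_def)
      next
        case 2 then show ?thesis using s1 s2 fr by (simp add: fH_def)
      next
        case 3
        have y: "hinv G x \<in> hedges G" "hinv G (hinv G x) = x" using inv 3 by auto
        have k: "x \<noteq> b" "x \<noteq> c" "hinv G x \<noteq> b" "hinv G x \<noteq> c" "x \<noteq> a'" "x \<noteq> c'"
          "hinv G x \<noteq> a'" "hinv G x \<noteq> c'" "hinv G x = h0 \<longleftrightarrow> x = ?k"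
          using hv fr y 3 by metis+
        show ?thesis
        proof (cases "x = ?k")
          case True
          then show ?thesis using 3 k s1 s2 hv fr y kne by (auto simp: fH_def)
        next
          case False
          then show ?thesis using 3 k s1 s2 hv fr y by (auto simp: fH_def)
        qed
      qed
    qed
    show ?thesis using he hi by blast
  qed
  have "iso_at (contract ?G1 h0) (contract ?G2 h0) (contract_vertex ?G1 h0) (contract_vertex ?G2 h0)"
    unfolding iso_at_def
    apply (rule exI[of _ id], rule exI[of _ fH])
    using bij main V1 V2 s1 s2 h0in hinvc1 by (simp add: contract_vertex_def)
  then show ?thesis unfolding strongly_linked_def using nl1 nl2 by blast
qed


theorem mainTheorem11:
  fixes G' G1 G2 :: "('v, 'h) lgraph" and n :: nat
  assumes "n \<ge> 1"
    and "is_graph G'" and "three_regular G'" and "card (legs G') = n - 1"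
    and "obtained_by_leg_insertion G' G1"
    and "obtained_by_leg_insertion G' G2"
  shows "linked G1 G2"
proof -
  have g: "is_graph G'" by fact
  have wfg: "wfg G'" using g unfolding is_graph_def wfg_def by blast
  have inv: "\<And>h. h \<in> hedges G' \<Longrightarrow> hinv G' h \<in> hedges G' \<and> hinv G' (hinv G' h) = h \<and> hend G' h \<in> verts G'"
    using wfg unfolding wfg_def by blast
  have conn: "connected_graph G'" using g unfolding is_graph_def by blast
  obtain h1 w1 a1 b1 c1 where h1: "h1 \<in> hedges G'" and f1: "freshg G' w1 a1 b1 c1"
      and G1: "G1 = insert_leg G' h1 w1 a1 b1 c1"
    using assms(5) unfolding obtained_by_leg_insertion_def freshg_def by blast
  obtain h2 w2 a2 b2 c2 where h2: "h2 \<in> hedges G'" and f2: "freshg G' w2 a2 b2 c2"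
      and G2: "G2 = insert_leg G' h2 w2 a2 b2 c2"
    using assms(6) unfolding obtained_by_leg_insertion_def freshg_def by blast
  let ?I = "\<lambda>h. insert_leg G' h w1 a1 b1 c1"
  define S where "S = {h \<in> hedges G'. linked (?I h) G2}"
  have gr: "is_graph (?I h)" if "h \<in> hedges G'" for h using ins_graph[OF g f1 that] .
  have gr2: "is_graph G2" using ins_graph[OF g f2 h2] G2 by simp
  have base: "h2 \<in> S"
    unfolding S_def linked_def using h2 gr[OF h2] gr2 sl_same[OF wfg f1 f2 h2 h2] G2 by auto
  have same: "h' \<in> S" if "h \<in> S" "h' \<in> hedges G'" "hend G' h' = hend G' h" for h h'
  proof -
    have h: "h \<in> hedges G'" "linked (?I h) G2" using that(1) unfolding S_def by auto
    have "strongly_linked (?I h') (?I h)" using sl_same[OF wfg f1 f1 that(2) h(1) that(3)] .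
    then show ?thesis using h that(2) gr unfolding S_def linked_def
      by (auto intro: converse_rtranclp_into_rtranclp)
  qed
  have flip: "hinv G' h \<in> S" if "h \<in> S" "hinv G' h \<noteq> h" for h
  proof -
    have h: "h \<in> hedges G'" "linked (?I h) G2" using that(1) unfolding S_def by auto
    have k: "hinv G' h \<in> hedges G'" "hinv G' (hinv G' h) = h" using inv h(1) by auto
    have "strongly_linked (?I (hinv G' h)) (?I (hinv G' (hinv G' h)))"
      using sl_flip[OF wfg f1 f1 k(1)] k that(2) by metis
    then have "strongly_linked (?I (hinv G' h)) (?I h)" using k by simp
    then show ?thesis using h k gr unfolding S_def linked_def
      by (auto intro: converse_rtranclp_into_rtranclp)
  qed
  have reach: "\<exists>h \<in> S. hend G' h = u" if "(adj G')\<^sup>*\<^sup>* (hend G' h2) u" for u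
    using that
  proof induction
    case base then show ?case using \<open>h2 \<in> S\<close> by blast
  next
    case (step x y)
    then obtain h where h: "h \<in> S" "hend G' h = x" by blast
    from step(2) obtain e where e: "e \<in> hedges G'" "hinv G' e \<noteq> e" "hend G' e = x" "hend G' (hinv G' e) = y"
      unfolding adj_def by blast
    have "e \<in> S" using same[OF h(1) e(1)] h e by simp
    then have "hinv G' e \<in> S" using flip e by blast
    then show ?case using e by blast
  qed
  have "hend G' h1 \<in> verts G'" "hend G' h2 \<in> verts G'" using inv h1 h2 by auto
  then have "(adj G')\<^sup>*\<^sup>* (hend G' h2) (hend G' h1)" using conn unfolding connected_graph_def by blast
  then obtain h where "h \<in> S" "hend G' h = hend G' h1" using reach by blast
  then have "h1 \<in> S" using same h1 by metis
  then show ?thesis using G1 unfolding S_def by simp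
qed

end
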